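(* Let $X=X_1\times\cdots\times X_n$ be finite, $S=\{1,\ldots,n\}$, and $\varrho(\mathcal{C})\ge0$ for $\mathcal{C}\in\boldsymbol{P}(S)$. Consider the chemical reaction network (a multiset of reactions with species set $X$) consisting of the reactions \[ \sum_{j=1}^{|\mathcal{C}|} x^{(j)} \xrightarrow{\ \varrho(\mathcal{C})/|\mathcal{C}|\ } \sum_{j=1}^{|\mathcal{C}|}\ \bigsqcup_{i=1}^{|\mathcal{C}|}\pi_{C_i}\big(x^{(i+j-1)}\big), \] one for every $\mathcal{C}=\{C_1,\ldots,C_{|\mathcal{C}|}\}\in\boldsymbol{P}(S)$ and every ordered tuple $(x^{(1)},\ldots,x^{(|\mathcal{C}|)})\in X^{|\mathcal{C}|}$ (indices modulo $|\mathcal{C}|$). After discarding the reactions whose substrate complex equals their product complex, this network is strongly reversible: it can be partitioned into pairs, each consisting of a reaction $r_1+\cdots+r_m\xrightarrow{\kappa}s_1+\cdots+s_m$ together with its backward reaction $s_1+\cdots+s_m\xrightarrow{\kappa}r_1+\cdots+r_m$ with the same reaction constant $\kappa$.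
   Context: $\boldsymbol{P}(S)$ is the set of partitions of $S$; blocks are enumerated so that $C_1\ni 1$ and $C_k$ contains the smallest element not in $C_1\cup\cdots\cup C_{k-1}$. $\pi_A$ is the coordinate projection onto the sites in $A$, and $\sqcup$ joins sequence fragments on disjoint site sets into one sequence respecting site positions ($y^{(1)}\sqcup\cdots\sqcup y^{(k)}$ has entry $y^{(j)}_i$ at site $i\in U_j$, where $y^{(j)}$ is indexed by $U_j$). Complexes are formal sums (multisets) of elements of $X$. *)

theory Defs
  imports "HOL-Library.Multiset" "HOL-Library.Disjoint_Sets" Complex_Main
begin

text \<open>Sites are S = {1..n}; a sequence x in X = X_1 x ... x X_n is an extensional
  function on {1..n} (value undefined outside), i.e. an element of PiE {1..n} Xs.\<close>

definition seq_space :: "nat \<Rightarrow> (nat \<Rightarrow> 'a set) \<Rightarrow> (nat \<Rightarrow> 'a) set" where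
  "seq_space n Xs = PiE {1..n} Xs"

text \<open>Enumerated partition: the list of blocks C_1,...,C_k of a partition of S,
  enumerated so that C_1 contains the least element and C_k contains the least
  element not in earlier blocks, i.e. ordered by strictly increasing minima.\<close>

definition enum_partition :: "nat set \<Rightarrow> nat set list \<Rightarrow> bool" where
  "enum_partition S Cs \<longleftrightarrow> partition_on S (set Cs) \<and> distinct Cs \<and> sorted_wrt (<) (map Min Cs)"

definition proj :: "nat set \<Rightarrow> (nat \<Rightarrow> 'a) \<Rightarrow> (nat \<Rightarrow> 'a)" where
  "proj A x = restrict x A"

definition join :: "nat set list \<Rightarrow> (nat \<Rightarrow> 'a) list \<Rightarrow> (nat \<Rightarrow> 'a)" where
  "join Cs ys = (\<lambda>s. if (\<exists>i<length Cs. s \<in> Cs ! i)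
                     then (ys ! (THE i. i < length Cs \<and> s \<in> Cs ! i)) s else undefined)"

type_synonym 'a reaction = "(nat \<Rightarrow> 'a) multiset \<times> (nat \<Rightarrow> 'a) multiset \<times> real"

text \<open>The reaction for the enumerated partition Cs (k blocks) and tuple xs = (x^(1),...,x^(k)),
  0-based: substrate sum_j x^(j); product sum_j join_i pi_{C_i}(x^(i+j mod k)).\<close>
definition recomb_reaction :: "(nat set set \<Rightarrow> real) \<Rightarrow> nat set list \<Rightarrow> (nat \<Rightarrow> 'a) list \<Rightarrow> 'a reaction" where
  "recomb_reaction \<rho> Cs xs =
     (let k = length Cs in
      (mset xs,
       mset (map (\<lambda>j. join Cs (map (\<lambda>i. proj (Cs ! i) (xs ! ((i + j) mod k))) [0..<k])) [0..<k]),
       \<rho> (set Cs) / real k))"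

definition recomb_index :: "nat \<Rightarrow> (nat \<Rightarrow> 'a set) \<Rightarrow> (nat set list \<times> (nat \<Rightarrow> 'a) list) set" where
  "recomb_index n Xs = {(Cs, xs). enum_partition {1..n} Cs \<and> length xs = length Cs \<and> set xs \<subseteq> seq_space n Xs}"

definition recomb_network :: "nat \<Rightarrow> (nat \<Rightarrow> 'a set) \<Rightarrow> (nat set set \<Rightarrow> real) \<Rightarrow> 'a reaction multiset" where
  "recomb_network n Xs \<rho> = image_mset (\<lambda>(Cs, xs). recomb_reaction \<rho> Cs xs) (mset_set (recomb_index n Xs))"

definition backward :: "'b multiset \<times> 'b multiset \<times> real \<Rightarrow> 'b multiset \<times> 'b multiset \<times> real" where
  "backward r = (case r of (s, p, \<kappa>) \<Rightarrow> (p, s, \<kappa>))"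

definition strongly_reversible :: "('b multiset \<times> 'b multiset \<times> real) multiset \<Rightarrow> bool" where
  "strongly_reversible N \<longleftrightarrow> (\<exists>M. N = M + image_mset backward M)"

definition discard_trivial :: "('b multiset \<times> 'b multiset \<times> real) multiset \<Rightarrow> ('b multiset \<times> 'b multiset \<times> real) multiset" where
  "discard_trivial N = filter_mset (\<lambda>(s, p, \<kappa>). s \<noteq> p) N"

end

theory Submission
  imports Defs
begin

lemma modarith: "(k::nat) > 0 \<Longrightarrow> j < k \<Longrightarrow> i < k \<Longrightarrow> (i + (k - (i + j) mod k) mod k) mod k = (k - j) mod k"
proof -
  assume a: "k > 0" "j < k" "i < k"
  show ?thesis
  proof (cases "i + j < k")
    case True
    then show ?thesis using a by (cases "i + j = 0") (auto)
  next
    case False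
    then have e: "(i + j) mod k = i + j - k" using a by (simp add: le_mod_geq)
    show ?thesis using a False unfolding e
      by (cases "i + j = k") (auto simp: le_mod_geq)
  qed
qed

lemma modinv: "(k::nat) > 0 \<Longrightarrow> m < k \<Longrightarrow> (k - (k - m) mod k) mod k = m"
  by (cases "m = 0") auto

lemma join_at:
  assumes "enum_partition S Cs" "i < length Cs" "s \<in> Cs ! i"
  shows "join Cs ys s = (ys ! i) s"
proof -
  have P: "partition_on S (set Cs)" "distinct Cs" using assms(1) unfolding enum_partition_def by auto
  have u: "i' = i" if "i' < length Cs" "s \<in> Cs ! i'" for i'
  proof (rule ccontr)
    assume ne: "i' \<noteq> i"
    have "Cs ! i' \<noteq> Cs ! i" using nth_eq_iff_index_eq[OF P(2) that(1) assms(2)] ne by blast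
    moreover have "Cs ! i' \<in> set Cs" "Cs ! i \<in> set Cs" using that(1) assms(2) by auto
    moreover have "disjoint (set Cs)" using P(1) unfolding partition_on_def by blast
    ultimately have "Cs ! i' \<inter> Cs ! i = {}" unfolding disjoint_def by blast
    then show False using that(2) assms(3) by blast
  qed
  have T: "(THE i'. i' < length Cs \<and> s \<in> Cs ! i') = i"
    by (rule the_equality) (use assms u in blast)+
  have E: "\<exists>i'<length Cs. s \<in> Cs ! i'" using assms by blast
  show ?thesis unfolding join_def by (subst if_P[OF E]) (simp only: T)
qed

lemma join_out:
  assumes "enum_partition S Cs" "s \<notin> S"
  shows "join Cs ys s = undefined"
proof -
  have P: "partition_on S (set Cs)" using assms(1) unfolding enum_partition_def by auto
  have "\<not> (\<exists>i<length Cs. s \<in> Cs ! i)"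
    using P assms(2) unfolding partition_on_def by (auto simp: set_conv_nth)
  then show ?thesis unfolding join_def by (subst if_not_P) auto
qed

definition prodl :: "nat set list \<Rightarrow> (nat \<Rightarrow> 'a) list \<Rightarrow> nat \<Rightarrow> (nat \<Rightarrow> 'a)" where
  "prodl Cs xs j = join Cs (map (\<lambda>i. proj (Cs ! i) (xs ! ((i + j) mod length Cs))) [0..<length Cs])"

definition Phi :: "nat set list \<Rightarrow> (nat \<Rightarrow> 'a) list \<Rightarrow> (nat \<Rightarrow> 'a) list" where
  "Phi Cs xs = map (\<lambda>m. prodl Cs xs ((length Cs - m) mod length Cs)) [0..<length Cs]"

lemma reaction_eq: "recomb_reaction \<rho> Cs xs = (mset xs, mset (map (prodl Cs xs) [0..<length Cs]), \<rho> (set Cs) / real (length Cs))"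
  unfolding recomb_reaction_def prodl_def Let_def by simp

lemma prodl_at:
  assumes "enum_partition {1..n} Cs" "length xs = length Cs" "j < length Cs" "i < length Cs" "s \<in> Cs ! i"
  shows "prodl Cs xs j s = (xs ! ((i + j) mod length Cs)) s"
  unfolding prodl_def
  apply (subst join_at[OF assms(1,4,5)])
  using assms by (simp add: proj_def)

lemma prodl_out:
  assumes "enum_partition {1..n} Cs" "s \<notin> {1..n}"
  shows "prodl Cs xs j s = undefined"
  unfolding prodl_def by (rule join_out[OF assms])

lemma cover:
  assumes "enum_partition {1..n} Cs" "s \<in> {1..n}"
  obtains i where "i < length Cs" "s \<in> Cs ! i"
proof -
  have "partition_on {1..n} (set Cs)" using assms(1) unfolding enum_partition_def by auto
  then have "s \<in> \<Union>(set Cs)" using assms(2) unfolding partition_on_def by auto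
  then show ?thesis using that by (auto simp: in_set_conv_nth)
qed

lemma prodl_space:
  assumes "(Cs, xs) \<in> recomb_index n Xs" "j < length Cs"
  shows "prodl Cs xs j \<in> seq_space n Xs"
proof -
  have a: "enum_partition {1..n} Cs" "length xs = length Cs" "set xs \<subseteq> seq_space n Xs"
    using assms(1) unfolding recomb_index_def by auto
  show ?thesis unfolding seq_space_def
  proof (rule PiE_I)
    fix s assume s: "s \<in> {1..n}"
    then obtain i where i: "i < length Cs" "s \<in> Cs ! i" using cover a(1) by blast
    have "length Cs > 0" using i by auto
    then have "xs ! ((i + j) mod length Cs) \<in> seq_space n Xs" using a by auto
    then show "prodl Cs xs j s \<in> Xs s"
      using prodl_at[OF a(1) a(2) assms(2) i] s unfolding seq_space_def by auto
  next
    fix s assume "s \<notin> {1..n}"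
    then show "prodl Cs xs j s = undefined" using prodl_out a(1) by blast
  qed
qed

lemma prodl_Phi:
  assumes "(Cs, xs) \<in> recomb_index n Xs" "j < length Cs"
  shows "prodl Cs (Phi Cs xs) j = xs ! ((length Cs - j) mod length Cs)"
proof (rule ext)
  fix s
  have a: "enum_partition {1..n} Cs" "length xs = length Cs" "set xs \<subseteq> seq_space n Xs"
    using assms(1) unfolding recomb_index_def by auto
  let ?k = "length Cs"
  have k: "?k > 0" using assms(2) by auto
  show "prodl Cs (Phi Cs xs) j s = (xs ! ((length Cs - j) mod length Cs)) s"
  proof (cases "s \<in> {1..n}")
    case True
    then obtain i where i: "i < ?k" "s \<in> Cs ! i" using cover a(1) by blast
    have lP: "length (Phi Cs xs) = ?k" by (simp add: Phi_def)
    have "prodl Cs (Phi Cs xs) j s = (Phi Cs xs ! ((i + j) mod ?k)) s"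
      by (rule prodl_at[OF a(1) lP assms(2) i])
    also have "\<dots> = prodl Cs xs ((?k - (i + j) mod ?k) mod ?k) s"
      using k by (simp add: Phi_def)
    also have "\<dots> = (xs ! ((i + (?k - (i + j) mod ?k) mod ?k) mod ?k)) s"
      using prodl_at[OF a(1) a(2) _ i] k by simp
    also have "\<dots> = (xs ! ((?k - j) mod ?k)) s"
      using modarith[OF k assms(2) i(1)] by simp
    finally show ?thesis .
  next
    case False
    have "(?k - j) mod ?k < ?k" using k by simp
    then have "xs ! ((?k - j) mod ?k) \<in> seq_space n Xs" using a by auto
    then have "(xs ! ((?k - j) mod ?k)) s = undefined"
      using False unfolding seq_space_def by (rule PiE_arb)
    moreover have "prodl Cs (Phi Cs xs) j s = undefined" by (rule prodl_out[OF a(1) False])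
    ultimately show ?thesis by simp
  qed
qed

lemma Phi_index:
  assumes "(Cs, xs) \<in> recomb_index n Xs"
  shows "(Cs, Phi Cs xs) \<in> recomb_index n Xs"
proof -
  have a: "enum_partition {1..n} Cs" "length xs = length Cs"
    using assms(1) unfolding recomb_index_def by auto
  have "set (Phi Cs xs) \<subseteq> seq_space n Xs"
  proof -
    have "\<And>m. m < length Cs \<Longrightarrow> prodl Cs xs ((length Cs - m) mod length Cs) \<in> seq_space n Xs"
    proof -
      fix m assume "m < length Cs"
      then have "(length Cs - m) mod length Cs < length Cs" by (intro mod_less_divisor) linarith
      then show "prodl Cs xs ((length Cs - m) mod length Cs) \<in> seq_space n Xs" by (rule prodl_space[OF assms])
    qed
    then show ?thesis unfolding Phi_def by auto
  qed
  then show ?thesis using a unfolding recomb_index_def Phi_def by auto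
qed

lemma Phi_Phi:
  assumes "(Cs, xs) \<in> recomb_index n Xs"
  shows "Phi Cs (Phi Cs xs) = xs"
proof -
  have a: "length xs = length Cs"
    using assms(1) unfolding recomb_index_def by auto
  show ?thesis
  proof (rule nth_equalityI)
    show "length (Phi Cs (Phi Cs xs)) = length xs" using a by (simp add: Phi_def)
    fix m assume "m < length (Phi Cs (Phi Cs xs))"
    then have m: "m < length Cs" by (simp add: Phi_def)
    then have k: "length Cs > 0" by auto
    have "Phi Cs (Phi Cs xs) ! m = prodl Cs (Phi Cs xs) ((length Cs - m) mod length Cs)"
      using m by (simp add: Phi_def)
    also have "\<dots> = xs ! ((length Cs - (length Cs - m) mod length Cs) mod length Cs)"
      using prodl_Phi[OF assms] k by simp
    also have "\<dots> = xs ! m" using modinv[OF k m] by simp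
    finally show "Phi Cs (Phi Cs xs) ! m = xs ! m" .
  qed
qed

lemma mset_perm:
  "mset (map (\<lambda>m. f ((k - m) mod k)) [0..<k]) = mset (map f [0..<(k::nat)])"
proof -
  let ?g = "\<lambda>m. (k - m) mod k"
  have gg: "?g (?g x) = x" if "x \<in> {0..<k}" for x
  proof -
    have "k > 0" "x < k" using that by auto
    then show ?thesis by (rule modinv)
  qed
  have inj: "inj_on ?g {0..<k}"
  proof (rule inj_onI)
    fix x y assume xy: "x \<in> {0..<k}" "y \<in> {0..<k}" "?g x = ?g y"
    have "x = ?g (?g x)" using gg[OF xy(1)] by simp
    also have "\<dots> = ?g (?g y)" using xy(3) by simp
    also have "\<dots> = y" using gg[OF xy(2)] .
    finally show "x = y" .
  qed
  have im: "?g ` {0..<k} = {0..<k}"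
  proof
    show "?g ` {0..<k} \<subseteq> {0..<k}"
    proof
      fix y assume "y \<in> ?g ` {0..<k}"
      then obtain x where "x \<in> {0..<k}" "y = ?g x" by blast
      then have "k > 0" "y = ?g x" by auto
      then show "y \<in> {0..<k}" by simp
    qed
    show "{0..<k} \<subseteq> ?g ` {0..<k}"
    proof
      fix m assume m: "m \<in> {0..<k}"
      then have "?g m \<in> {0..<k}" by auto
      then show "m \<in> ?g ` {0..<k}" using gg[OF m] by (metis image_eqI)
    qed
  qed
  have "map (\<lambda>m. f ((k - m) mod k)) [0..<k] = map f (map ?g [0..<k])" by simp
  then have "mset (map (\<lambda>m. f ((k - m) mod k)) [0..<k]) = image_mset f (mset (map ?g [0..<k]))"
    by (simp only: mset_map)
  also have "mset (map ?g [0..<k]) = image_mset ?g (mset_set {0..<k})"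
    by (simp only: mset_map mset_upt)
  also have "\<dots> = mset_set {0..<k}"
    using image_mset_mset_set[OF inj] im by simp
  also have "image_mset f (mset_set {0..<k}) = mset (map f [0..<k])"
    by (simp only: mset_map mset_upt)
  finally show ?thesis .
qed

lemma reaction_Phi:
  assumes "(Cs, xs) \<in> recomb_index n Xs"
  shows "recomb_reaction \<rho> Cs (Phi Cs xs) = backward (recomb_reaction \<rho> Cs xs)"
proof -
  have a: "length xs = length Cs"
    using assms(1) unfolding recomb_index_def by auto
  let ?k = "length Cs"
  have s: "mset (Phi Cs xs) = mset (map (prodl Cs xs) [0..<?k])"
    unfolding Phi_def by (rule mset_perm)
  have "map (prodl Cs (Phi Cs xs)) [0..<?k] = map (\<lambda>j. xs ! ((?k - j) mod ?k)) [0..<?k]"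
    using prodl_Phi[OF assms] by simp
  also have "mset \<dots> = mset (map (\<lambda>j. xs ! j) [0..<?k])" by (rule mset_perm)
  also have "map (\<lambda>j. xs ! j) [0..<?k] = xs" using a map_nth[of xs] by simp
  finally have p: "mset (map (prodl Cs (Phi Cs xs)) [0..<?k]) = mset xs" .
  show ?thesis unfolding reaction_eq backward_def using s p by simp
qed

lemma bb: "backward (backward x) = x"
  by (auto simp: backward_def split: prod.splits)

lemma cnt: "count (image_mset backward X) r = count X (backward r)"
proof (induction X)
  case empty
  then show ?case by simp
next
  case (add x X)
  have e: "(backward x = r) = (x = backward r)" using bb by metis
  show ?case using add by (simp add: e)
qed

lemma sym_split:
  fixes D :: "('b multiset \<times> 'b multiset \<times> real) multiset"
  assumes "\<And>r. count D r = count D (backward r)" "\<And>r. r \<in># D \<Longrightarrow> backward r \<noteq> r"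
  shows "\<exists>M. D = M + image_mset backward M"
  using assms
proof (induction "size D" arbitrary: D rule: less_induct)
  case less
  show ?case
  proof (cases "D = {#}")
    case True
    then show ?thesis by (rule_tac x="{#}" in exI) simp
  next
    case False
    then obtain r where r: "r \<in># D" by blast
    have ne: "backward r \<noteq> r" using less.prems(2) r by blast
    have rb: "backward r \<in># D" using less.prems(1)[of r] r by (metis count_greater_zero_iff)
    define D' where "D' = D - {#r, backward r#}"
    have "backward r \<in># D - {#r#}" using rb ne by (simp add: in_diff_count)
    then have sub: "{#r, backward r#} \<subseteq># D"
      using r by (simp add: insert_subset_eq_iff)
    have DD: "D = D' + {#r, backward r#}" unfolding D'_def by (rule subset_mset.diff_add[OF sub, symmetric])
    have sz: "size D' < size D" using DD by simp
    have c1: "count D' x = count D' (backward x)" for x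
    proof -
      have "count D x = count D (backward x)" using less.prems(1) .
      moreover have "count {#r, backward r#} x = count {#r, backward r#} (backward x)"
      proof -
        have im: "image_mset backward {#r, backward r#} = {#r, backward r#}" by (simp add: bb add_mset_commute)
        have "count {#r, backward r#} (backward x) = count (image_mset backward {#r, backward r#}) (backward x)"
          by (simp only: im)
        also have "\<dots> = count {#r, backward r#} x" by (simp only: cnt bb)
        finally show ?thesis by simp
      qed
      ultimately show ?thesis using DD by (metis add_right_cancel count_union)
    qed
    have c2: "x \<in># D' \<Longrightarrow> backward x \<noteq> x" for x
      using less.prems(2) DD by auto
    obtain M where "D' = M + image_mset backward M" using less.hyps[OF sz c1 c2] by blast
    then have "D = add_mset r M + image_mset backward (add_mset r M)" using DD by simp
    then show ?thesis by blast
  qed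
qed

lemma network_symm:
  assumes fin: "finite (recomb_index n Xs)"
  shows "image_mset backward (recomb_network n Xs \<rho>) = recomb_network n Xs \<rho>"
proof -
  let ?I = "recomb_index n Xs"
  let ?f = "\<lambda>(Cs, xs). recomb_reaction \<rho> Cs xs"
  let ?P = "\<lambda>(Cs, xs). (Cs, Phi Cs xs)"
  have PI: "?P p \<in> ?I" if "p \<in> ?I" for p
  proof (cases p)
    case (Pair Cs xs)
    then show ?thesis using Phi_index[of Cs xs n Xs] that by simp
  qed
  have PP: "?P (?P p) = p" if "p \<in> ?I" for p
  proof (cases p)
    case (Pair Cs xs)
    then show ?thesis using Phi_Phi[of Cs xs n Xs] that by simp
  qed
  have Pf: "?f (?P p) = backward (?f p)" if "p \<in> ?I" for p
  proof (cases p)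
    case (Pair Cs xs)
    then show ?thesis using reaction_Phi[of Cs xs n Xs \<rho>] that by simp
  qed
  have inj: "inj_on ?P ?I"
  proof (rule inj_onI)
    fix x y assume xy: "x \<in> ?I" "y \<in> ?I" "?P x = ?P y"
    have "x = ?P (?P x)" using PP[OF xy(1)] by simp
    also have "\<dots> = ?P (?P y)" using xy(3) by simp
    also have "\<dots> = y" using PP[OF xy(2)] .
    finally show "x = y" .
  qed
  have im: "?P ` ?I = ?I"
  proof
    show "?P ` ?I \<subseteq> ?I" using PI by blast
    show "?I \<subseteq> ?P ` ?I"
    proof
      fix p assume p: "p \<in> ?I"
      have "p = ?P (?P p)" using PP[OF p] by simp
      moreover have "?P p \<in> ?I" using PI[OF p] .
      ultimately show "p \<in> ?P ` ?I" by (rule image_eqI)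
    qed
  qed
  have "image_mset backward (image_mset ?f (mset_set ?I)) = image_mset (backward \<circ> ?f) (mset_set ?I)"
    by (simp only: multiset.map_comp)
  also have "\<dots> = image_mset (?f \<circ> ?P) (mset_set ?I)"
  proof (rule image_mset_cong)
    fix x assume "x \<in># mset_set ?I"
    then have "x \<in> ?I" using fin by simp
    then show "(backward \<circ> ?f) x = (?f \<circ> ?P) x" using Pf by simp
  qed
  also have "\<dots> = image_mset ?f (image_mset ?P (mset_set ?I))"
    by (simp only: multiset.map_comp)
  also have "image_mset ?P (mset_set ?I) = mset_set ?I"
    using image_mset_mset_set[OF inj] im by simp
  finally show ?thesis unfolding recomb_network_def .
qed

lemma discard_symm:
  assumes NB: "image_mset backward N = N"
  shows "strongly_reversible (discard_trivial N)"
proof -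
  define D where "D = discard_trivial N"
  have triv: "(\<lambda>(s, p, \<kappa>). s \<noteq> p) (backward x) = (\<lambda>(s, p, \<kappa>). s \<noteq> p) x" for x :: "'b multiset \<times> 'b multiset \<times> real"
    by (cases x) (auto simp: backward_def)
  have c1: "count D r = count D (backward r)" for r
  proof -
    have "count D r = (if (\<lambda>(s, p, \<kappa>). s \<noteq> p) r then count N r else 0)"
      unfolding D_def discard_trivial_def by (simp only: count_filter_mset)
    moreover have "count D (backward r) = (if (\<lambda>(s, p, \<kappa>). s \<noteq> p) r then count N (backward r) else 0)"
      unfolding D_def discard_trivial_def by (simp only: count_filter_mset triv)
    moreover have "count N r = count N (backward r)" using cnt[of N r] NB by simp
    ultimately show ?thesis by simp
  qed
  have c2: "backward r \<noteq> r" if "r \<in># D" for r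
  proof -
    obtain s p k where r: "r = (s, p, k)" by (cases r) blast
    have "s \<noteq> p" using that unfolding D_def discard_trivial_def r by simp
    then show ?thesis unfolding r backward_def by simp
  qed
  show ?thesis using sym_split[OF c1 c2] unfolding strongly_reversible_def D_def by blast
qed

theorem theorem3p4:
  fixes n :: nat and Xs :: "nat \<Rightarrow> 'a set" and \<rho> :: "nat set set \<Rightarrow> real"
  assumes "\<And>i. i \<in> {1..n} \<Longrightarrow> finite (Xs i)"
    and "\<And>P. partition_on {1..n} P \<Longrightarrow> \<rho> P \<ge> 0"
  shows "strongly_reversible (discard_trivial (recomb_network n Xs \<rho>))"
proof (cases "finite (recomb_index n Xs)")
  case True
  show ?thesis by (rule discard_symm[OF network_symm[OF True]])
next
  case False
  then have "recomb_network n Xs \<rho> = {#}" unfolding recomb_network_def by simp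
  then show ?thesis unfolding strongly_reversible_def discard_trivial_def
    by (rule_tac x="{#}" in exI) simp
qed

end
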